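(* Let $\tau\ge1$ and $\mathcal C$ a finite set of candidates. Form the pairwise majority graph on $\mathcal C$ in which each pairwise winner is determined by Weighted Majority Rule 3. Then every candidate in the uncovered set of this graph has distortion at most $\max\{(\frac{\tau+2}{\tau})^2,\tau^2\}$.
   Context: Voters $N=\{1,\dots,n\}$ and candidates $\mathcal C$ are points of an arbitrary metric space $(X,d)$. $SC(Y)=\sum_{i\in N}d(i,Y)$; distortion of $P$ is $SC(P)/\min_{Z\in\mathcal C}SC(Z)$. For a pair $P,Q$, Weighted Majority Rule 3 counts $|A|$, the number of voters with $d(i,Q)/d(i,P)\ge\tau$, and $|B|$, the number with $d(j,P)/d(j,Q)\ge\tau$, and declares $P$ the winner if $|A|\ge|B|$, else $Q$ (other voters are ignored). A candidate $P$ is in the uncovered set if for every other candidate $Z$, either $P$ beats $Z$, or there is a candidate $Q$ such that $P$ beats $Q$ and $Q$ beats $Z$. *)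

theory Defs
  imports Main "HOL-Analysis.Analysis"
begin

definition SC :: "nat \<Rightarrow> (nat \<Rightarrow> 'a::metric_space) \<Rightarrow> 'a \<Rightarrow> real" where
  "SC n v Y = (\<Sum>i\<in>{1..n}. dist (v i) Y)"

definition distortion :: "nat \<Rightarrow> (nat \<Rightarrow> 'a::metric_space) \<Rightarrow> 'a set \<Rightarrow> 'a \<Rightarrow> real" where
  "distortion n v C P = SC n v P / Min (SC n v ` C)"

text \<open>Set A: voters with d(i,Q)/d(i,P) \<ge> tau, written multiplicatively
(d(i,Q) \<ge> tau * d(i,P)), so that d(i,P)=0 < d(i,Q) counts as ratio +\<infinity>.\<close>
definition setA :: "real \<Rightarrow> nat \<Rightarrow> (nat \<Rightarrow> 'a::metric_space) \<Rightarrow> 'a \<Rightarrow> 'a \<Rightarrow> nat set" where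
  "setA \<tau> n v P Q = {i\<in>{1..n}. dist (v i) Q \<ge> \<tau> * dist (v i) P}"

definition wmr3_P_wins :: "real \<Rightarrow> nat \<Rightarrow> (nat \<Rightarrow> 'a::metric_space) \<Rightarrow> 'a \<Rightarrow> 'a \<Rightarrow> bool" where
  "wmr3_P_wins \<tau> n v P Q \<longleftrightarrow> card (setA \<tau> n v P Q) \<ge> card (setA \<tau> n v Q P)"

text \<open>A pairwise majority graph (tournament) on C whose edges agree with WMR3:
for every pair of distinct candidates exactly one beats the other, and whenever
P beats Q the rule declares P the winner (ties may be oriented either way).\<close>
definition wmr3_graph :: "real \<Rightarrow> nat \<Rightarrow> (nat \<Rightarrow> 'a::metric_space) \<Rightarrow> 'a set \<Rightarrow> ('a \<Rightarrow> 'a \<Rightarrow> bool) \<Rightarrow> bool" where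
  "wmr3_graph \<tau> n v C beats \<longleftrightarrow>
     (\<forall>P\<in>C. \<forall>Q\<in>C. P \<noteq> Q \<longrightarrow> (beats P Q \<longleftrightarrow> \<not> beats Q P)) \<and>
     (\<forall>P\<in>C. \<forall>Q\<in>C. P \<noteq> Q \<longrightarrow> beats P Q \<longrightarrow> wmr3_P_wins \<tau> n v P Q)"

definition uncovered :: "'a set \<Rightarrow> ('a \<Rightarrow> 'a \<Rightarrow> bool) \<Rightarrow> 'a \<Rightarrow> bool" where
  "uncovered C beats P \<longleftrightarrow> P \<in> C \<and>
     (\<forall>Z\<in>C. Z \<noteq> P \<longrightarrow> beats P Z \<or> (\<exists>Q\<in>C. beats P Q \<and> beats Q Z))"

end

theory Submission
  imports Defs
begin

lemma card_diff_ge: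
  assumes "finite A" "finite B" "card A \<ge> card B"
  shows "card (B - A) \<le> card (A - B)"
proof -
  have "card (A - B) = card A - card (A \<inter> B)" using assms by (simp add: card_Diff_subset_Int)
  moreover have "card (B - A) = card B - card (B \<inter> A)" using assms by (simp add: card_Diff_subset_Int)
  moreover have "A \<inter> B = B \<inter> A" by blast
  ultimately show ?thesis using assms(3) by (metis diff_le_mono)
qed

lemma one_step:
  fixes v :: "nat \<Rightarrow> 'a::metric_space"
  assumes t: "\<tau> \<ge> 1" and w: "wmr3_P_wins \<tau> n v P Z"
  shows "SC n v P \<le> max ((\<tau>+2)/\<tau>) \<tau> * SC n v Z"
proof -
  define K where "K = max ((\<tau>+2)/\<tau>) \<tau>"
  define D where "D = dist P Z"
  define A where "A = setA \<tau> n v P Z"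
  define B where "B = setA \<tau> n v Z P"
  have AB: "A \<subseteq> {1..n}" "B \<subseteq> {1..n}" unfolding A_def B_def setA_def by auto
  have fin: "finite A" "finite B" using AB finite_subset by auto
  have cc: "card (B - A) \<le> card (A - B)"
    using card_diff_ge[OF fin] w unfolding wmr3_P_wins_def A_def B_def by simp
  have K1: "K \<ge> 1" "K \<ge> \<tau>" "K \<ge> (\<tau>+2)/\<tau>" unfolding K_def using t by auto
  have D0: "D \<ge> 0" unfolding D_def by simp
  define h where "h i = D * (of_bool (i \<in> B - A) - of_bool (i \<in> A - B))" for i
  have gh: "dist (v i) P - K * dist (v i) Z \<le> h i" if i: "i \<in> {1..n}" for i
  proof -
    have tri1: "dist (v i) P \<le> dist (v i) Z + D" unfolding D_def
      by (metis dist_commute dist_triangle)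
    have tri2: "D \<le> dist (v i) P + dist (v i) Z" unfolding D_def
      by (metis dist_commute dist_triangle)
    have dz: "dist (v i) Z \<ge> 0" "dist (v i) P \<ge> 0" by auto
    consider (a) "i \<in> A - B" | (b) "i \<in> B - A" | (c) "i \<in> A \<inter> B" | (d) "i \<notin> A" "i \<notin> B" by blast
    then show ?thesis
    proof cases
      case a
      then have "dist (v i) Z \<ge> \<tau> * dist (v i) P" unfolding A_def setA_def by auto
      hence p: "dist (v i) P \<le> dist (v i) Z / \<tau>" using t by (simp add: field_simps)
      have "K * dist (v i) Z \<ge> (\<tau>+2)/\<tau> * dist (v i) Z" by (rule mult_right_mono[OF K1(3) dz(1)])
      moreover have "(\<tau>+2)/\<tau> * dist (v i) Z = dist (v i) Z + 2 * (dist (v i) Z / \<tau>)"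
        using t by (simp add: field_simps)
      ultimately show ?thesis using a p tri2 unfolding h_def by auto
    next
      case b
      have "K * dist (v i) Z \<ge> 1 * dist (v i) Z" by (rule mult_right_mono[OF K1(1) dz(1)])
      then show ?thesis using b tri1 unfolding h_def by auto
    next
      case c
      then have "dist (v i) Z \<ge> \<tau> * dist (v i) P" unfolding A_def setA_def by auto
      hence p: "dist (v i) P \<le> dist (v i) Z / \<tau>" using t by (simp add: field_simps)
      have "dist (v i) Z * 1 \<le> dist (v i) Z * \<tau>" by (rule mult_left_mono[OF t dz(1)])
      hence "dist (v i) Z / \<tau> \<le> dist (v i) Z" using t by (simp add: divide_le_eq)
      moreover have "K * dist (v i) Z \<ge> 1 * dist (v i) Z" by (rule mult_right_mono[OF K1(1) dz(1)])
      ultimately show ?thesis using c p unfolding h_def by auto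
    next
      case d
      then have "\<not> dist (v i) P \<ge> \<tau> * dist (v i) Z" using i unfolding B_def setA_def by auto
      moreover have "K * dist (v i) Z \<ge> \<tau> * dist (v i) Z" by (rule mult_right_mono[OF K1(2) dz(1)])
      ultimately show ?thesis using d unfolding h_def by auto
    qed
  qed
  have sumh: "(\<Sum>i\<in>{1..n}. h i) = D * (real (card (B - A)) - real (card (A - B)))"
  proof -
    have "(\<Sum>i\<in>{1..n}. h i) = D * ((\<Sum>i\<in>{1..n}. of_bool (i \<in> B - A)) - (\<Sum>i\<in>{1..n}. of_bool (i \<in> A - B)))"
      unfolding h_def by (simp add: sum_distrib_left sum_subtractf right_diff_distrib)
    moreover have "(\<Sum>i\<in>{1..n}. (of_bool (i \<in> S)::real)) = real (card S)" if "S \<subseteq> {1..n}" for S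
    proof -
      have "(\<Sum>i\<in>{1..n}. (of_bool (i \<in> S)::real)) = (\<Sum>i\<in>{1..n}. if i \<in> S then 1 else 0)"
        by (simp add: of_bool_def)
      also have "\<dots> = real (card ({1..n} \<inter> S))" by (simp add: sum.If_cases)
      also have "{1..n} \<inter> S = S" using that by blast
      finally show ?thesis .
    qed
    ultimately show ?thesis using AB by (metis Diff_subset subset_trans)
  qed
  have "SC n v P - K * SC n v Z = (\<Sum>i\<in>{1..n}. dist (v i) P - K * dist (v i) Z)"
    unfolding SC_def by (simp add: sum_subtractf sum_distrib_left)
  also have "\<dots> \<le> (\<Sum>i\<in>{1..n}. h i)" by (rule sum_mono) (use gh in auto)
  also have "\<dots> \<le> 0" unfolding sumh using cc D0 by (simp add: mult_nonneg_nonpos)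
  finally show ?thesis unfolding K_def by simp
qed

theorem mainTheorem8:
  fixes \<tau> :: real and n :: nat and v :: "nat \<Rightarrow> 'a::metric_space" and C :: "'a set"
    and beats :: "'a \<Rightarrow> 'a \<Rightarrow> bool" and P :: 'a
  assumes "\<tau> \<ge> 1"
    and "finite C" and "C \<noteq> {}"
    and "wmr3_graph \<tau> n v C beats"
    and "uncovered C beats P"
  shows "distortion n v C P \<le> max (((\<tau> + 2) / \<tau>)\<^sup>2) (\<tau>\<^sup>2)"
proof -
  define K where "K = max ((\<tau>+2)/\<tau>) \<tau>"
  have K1: "K \<ge> 1" unfolding K_def using assms(1) by auto
  have KK: "K^2 = max (((\<tau> + 2) / \<tau>)\<^sup>2) (\<tau>\<^sup>2)"
    unfolding K_def using assms(1) by (auto simp: max_def power_mono)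
  have SCnn: "SC n v Y \<ge> 0" for Y unfolding SC_def by (simp add: sum_nonneg)
  have PC: "P \<in> C" using assms(5) unfolding uncovered_def by auto
  have step: "SC n v X \<le> K * SC n v Y" if "X \<in> C" "Y \<in> C" "beats X Y" "X \<noteq> Y" for X Y
    using one_step[OF assms(1)] assms(4) that unfolding wmr3_graph_def K_def by blast
  have all: "SC n v P \<le> K^2 * SC n v Z" if Z: "Z \<in> C" for Z
  proof (cases "Z = P")
    case True
    have "SC n v P \<le> K^2 * SC n v P" using K1 SCnn[of P]
      by (metis mult_le_cancel_right1 one_le_power linorder_not_le order_less_le_trans)
    then show ?thesis using True by simp
  next
    case False
    have a: "K * SC n v Z \<le> K^2 * SC n v Z" using K1 SCnn[of Z]
      by (simp add: mult_right_mono power2_eq_square)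
    from assms(5) False Z consider "beats P Z" | Q where "Q \<in> C" "beats P Q" "beats Q Z"
      unfolding uncovered_def by blast
    then show ?thesis
    proof cases
      case 1 then show ?thesis using step[OF PC Z 1] False a by simp
    next
      case (2 Q)
      show ?thesis
      proof (cases "Q = P \<or> Q = Z")
        case True then show ?thesis using 2 step[OF PC Z] False a by auto
      next
        case F: False
        have "SC n v P \<le> K * SC n v Q" using step[OF PC 2(1) 2(2)] F by auto
        also have "\<dots> \<le> K * (K * SC n v Z)" using step[OF 2(1) Z 2(3)] F K1 by simp
        finally show ?thesis by (simp add: power2_eq_square)
      qed
    qed
  qed
  have fin: "finite (SC n v ` C)" "SC n v ` C \<noteq> {}" using assms(2,3) by auto
  obtain Z where Z: "Z \<in> C" "Min (SC n v ` C) = SC n v Z"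
    using Min_in[OF fin] by auto
  show ?thesis
  proof (cases "SC n v Z = 0")
    case True
    then show ?thesis unfolding distortion_def Z(2) using KK[symmetric] by simp
  next
    case False
    hence pos: "SC n v Z > 0" using SCnn[of Z] by simp
    have "SC n v P / SC n v Z \<le> K^2" using all[OF Z(1)] pos by (simp add: divide_le_eq)
    then show ?thesis unfolding distortion_def Z(2) KK .
  qed
qed

end
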